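(* Let $q_1,q_2,v$ be indeterminates and fix integers $1\le i<j$. Then $$\big\langle q_1^{\lambda_i}q_2^{\lambda_j}\big\rangle_v=\frac{(v)_\infty}{(v)_{i-1}\,(v^iq_1)_{j-i}\,(v^jq_1q_2)_\infty}=\frac{(v)_\infty}{(vq_1q_2)_\infty}\cdot\frac{(vq_1)_{i-1}\,(vq_1q_2)_{j-1}}{(v)_{i-1}\,(vq_1)_{j-1}}.$$
   Context: Notation: $(a)_0=1$, $(a)_r=\prod_{k=0}^{r-1}(1-av^k)$ for $r\ge1$, $(a)_\infty=\prod_{k\ge0}(1-av^k)$. For a function $f$ on the set $\mathcal P$ of partitions, $\langle f\rangle_v:=(v)_\infty\sum_{\lambda\in\mathcal P}f(\lambda)v^{|\lambda|}$, as a formal power series in $v$. Here $\lambda=(\lambda_1,\lambda_2,\ldots)$ with $\lambda_k=0$ for $k$ beyond the length of $\lambda$, and $\langle q_1^{\lambda_i}q_2^{\lambda_j}\rangle_v$ denotes $\langle f\rangle_v$ for $f(\lambda)=q_1^{\lambda_i}q_2^{\lambda_j}$. *)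

theory Defs
  imports "HOL-Computational_Algebra.Formal_Power_Series"
begin

definition partitions_of :: "nat \<Rightarrow> nat list set" where
  "partitions_of n = {xs. sorted_wrt (\<ge>) xs \<and> 0 \<notin> set xs \<and> sum_list xs = n}"

definition part :: "nat list \<Rightarrow> nat \<Rightarrow> nat" where
  "part xs k = (if 1 \<le> k \<and> k \<le> length xs then xs ! (k - 1) else 0)"

text \<open>Finite q-Pochhammer (a)_r = prod_{k<r} (1 - a v^k), with v = fps_X.\<close>
definition qpoch :: "'a::comm_ring_1 fps \<Rightarrow> nat \<Rightarrow> 'a fps" where
  "qpoch a r = (\<Prod>k<r. 1 - a * fps_X ^ k)"

definition qpoch_inf :: "'a::comm_ring_1 fps \<Rightarrow> 'a fps" where
  "qpoch_inf a = lim (\<lambda>r. qpoch a r)"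

definition bracket :: "(nat list \<Rightarrow> 'a::comm_ring_1) \<Rightarrow> 'a fps" where
  "bracket f = qpoch_inf fps_X * Abs_fps (\<lambda>n. \<Sum>xs\<in>partitions_of n. f xs)"

end

theory Submission
  imports Defs
begin

lemma len_le_sum: "0 \<notin> set xs \<Longrightarrow> length xs \<le> sum_list (xs::nat list)"
  by (induction xs) auto

lemma finite_partitions: "finite (partitions_of n)"
proof -
  have "partitions_of n \<subseteq> {xs. set xs \<subseteq> {0..n} \<and> length xs \<le> n}"
    using len_le_sum member_le_sum_list by (fastforce simp: partitions_of_def)
  thus ?thesis by (rule finite_subset) (rule finite_lists_length_le, simp)
qed

definition gmap :: "nat \<Rightarrow> nat list \<Rightarrow> nat list" where
  "gmap N mu = map Suc mu @ replicate (N - length mu) 1"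
definition hmap :: "nat list \<Rightarrow> nat list" where
  "hmap lam = filter (\<lambda>x. x \<noteq> 0) (map (\<lambda>x. x - 1) lam)"

lemma hg: "0 \<notin> set mu \<Longrightarrow> hmap (gmap N mu) = mu"
  by (induction mu) (auto simp: hmap_def gmap_def)

lemma gh: "sorted_wrt (\<ge>) lam \<Longrightarrow> 0 \<notin> set lam \<Longrightarrow> gmap (length lam) (hmap lam) = lam"
proof (induction lam)
  case Nil
  then show ?case by (simp add: gmap_def hmap_def)
next
  case (Cons a lam)
  show ?case
  proof (cases "a = 1")
    case True
    have le1: "\<forall>y\<in>set lam. y \<le> 1" using Cons.prems(1) True by simp
    have "0 \<notin> set lam" using Cons.prems(2) by simp
    hence all1: "\<forall>y\<in>set lam. y = 1" using le1 by (fastforce simp: le_Suc_eq)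
    hence "hmap (a # lam) = []" using True by (auto simp: hmap_def filter_empty_conv)
    moreover have "replicate (length lam) 1 = lam" by (rule replicate_length_same[OF all1])
    ultimately show ?thesis using True by (simp add: gmap_def)
  next
    case False
    with Cons.prems have "a > 1" by auto
    hence "hmap (a # lam) = (a - 1) # hmap lam" by (simp add: hmap_def)
    moreover have "gmap (length lam) (hmap lam) = lam" using Cons by auto
    ultimately show ?thesis using \<open>a > 1\<close> by (simp add: gmap_def)
  qed
qed

lemma part_gmap: "length mu \<le> N \<Longrightarrow> part (gmap N mu) k = (if 1 \<le> k \<and> k \<le> N then part mu k + 1 else 0)"
  by (auto simp: part_def gmap_def nth_append)

lemma sum_gmap: "length mu \<le> N \<Longrightarrow> sum_list (gmap N mu) = sum_list mu + N"
proof -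
  have "sum_list (map Suc mu) = sum_list mu + length mu" by (induction mu) auto
  thus "length mu \<le> N \<Longrightarrow> ?thesis" by (simp add: gmap_def sum_list_replicate)
qed

lemma rep_sorted: "sorted_wrt (\<lambda>x y. y \<le> x) (replicate n (x::nat))"
  by (induction n) auto

lemma gmap_mem:
  assumes "mu \<in> partitions_of m" "length mu \<le> N"
  shows "gmap N mu \<in> partitions_of (m + N)" "length (gmap N mu) = N"
proof -
  show "length (gmap N mu) = N" using assms(2) by (simp add: gmap_def)
  have "sorted_wrt (\<ge>) (gmap N mu)" using assms(1)
    by (auto simp: gmap_def partitions_of_def sorted_wrt_append sorted_wrt_map rep_sorted)
  thus "gmap N mu \<in> partitions_of (m + N)" using assms sum_gmap[OF assms(2)]
    by (auto simp: gmap_def partitions_of_def)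
qed

lemma hmap_mem:
  assumes "lam \<in> partitions_of n" "length lam = N"
  shows "hmap lam \<in> partitions_of (n - N)" "length (hmap lam) \<le> N"
proof -
  show l: "length (hmap lam) \<le> N" using assms(2) length_filter_le[of _ "map (\<lambda>x. x - 1) lam"]
    by (simp add: hmap_def)
  have s: "sorted_wrt (\<ge>) (hmap lam)" using assms(1)
  proof -
    have "sorted_wrt (\<ge>) lam" using assms(1) by (simp add: partitions_of_def)
    hence "sorted_wrt (\<ge>) (map (\<lambda>x. x - 1) lam)"
      by (simp add: sorted_wrt_map) (erule sorted_wrt_mono_rel[rotated], simp)
    thus ?thesis unfolding hmap_def by (rule sorted_wrt_filter)
  qed
  have "gmap N (hmap lam) = lam" using gh assms by (auto simp: partitions_of_def)
  hence "sum_list (hmap lam) + N = n" using sum_gmap[OF l] assms by (simp add: partitions_of_def)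
  thus "hmap lam \<in> partitions_of (n - N)" using s by (auto simp: partitions_of_def hmap_def)
qed

definition wt :: "'a::comm_ring_1 \<Rightarrow> 'a \<Rightarrow> nat \<Rightarrow> nat \<Rightarrow> nat list \<Rightarrow> 'a" where
  "wt q1 q2 i j lam = q1 ^ part lam i * q2 ^ part lam j"
definition cm :: "'a::comm_ring_1 \<Rightarrow> 'a \<Rightarrow> nat \<Rightarrow> nat \<Rightarrow> nat \<Rightarrow> 'a" where
  "cm q1 q2 i j N = (if N < i then 1 else if N < j then q1 else q1 * q2)"
definition PP :: "'a::comm_ring_1 \<Rightarrow> 'a \<Rightarrow> nat \<Rightarrow> nat \<Rightarrow> nat \<Rightarrow> 'a fps" where
  "PP q1 q2 i j N = Abs_fps (\<lambda>n. \<Sum>lam\<in>{lam\<in>partitions_of n. length lam \<le> N}. wt q1 q2 i j lam)"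
definition EE :: "'a::comm_ring_1 \<Rightarrow> 'a \<Rightarrow> nat \<Rightarrow> nat \<Rightarrow> nat \<Rightarrow> 'a fps" where
  "EE q1 q2 i j N = (\<Prod>m<N. 1 - fps_const (cm q1 q2 i j (Suc m)) * fps_X ^ Suc m)"

lemma part_beyond: "length mu < k \<Longrightarrow> part mu k = 0"
  by (simp add: part_def)

lemma wt_gmap:
  assumes "1 \<le> i" "i < j" "length mu \<le> N"
  shows "wt q1 q2 i j (gmap N mu) = cm q1 q2 i j N * wt q1 q2 i j mu"
  using assms part_beyond[of mu i] part_beyond[of mu j]
  by (auto simp: wt_def cm_def part_gmap)

lemma bijsum:
  assumes "1 \<le> i" "i < j" "1 \<le> N"
  shows "(\<Sum>lam\<in>{lam\<in>partitions_of n. length lam = N}. wt q1 q2 i j lam)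
     = (if N \<le> n then cm q1 q2 i j N * (\<Sum>mu\<in>{mu\<in>partitions_of (n - N). length mu \<le> N}. wt q1 q2 i j mu) else 0)"
proof (cases "N \<le> n")
  case False
  have E: "{lam\<in>partitions_of n. length lam = N} = {}"
    using False len_le_sum by (fastforce simp: partitions_of_def)
  show ?thesis unfolding E using False by simp
next
  case True
  have b: "bij_betw (gmap N) {mu\<in>partitions_of (n - N). length mu \<le> N} {lam\<in>partitions_of n. length lam = N}"
  proof (rule bij_betw_byWitness[where f'=hmap])
    show "\<forall>a\<in>{mu \<in> partitions_of (n - N). length mu \<le> N}. hmap (gmap N a) = a"
      using hg by (auto simp: partitions_of_def)
    show "\<forall>a\<in>{lam \<in> partitions_of n. length lam = N}. gmap N (hmap a) = a"
      using gh by (auto simp: partitions_of_def)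
    show "gmap N ` {mu \<in> partitions_of (n - N). length mu \<le> N} \<subseteq> {lam \<in> partitions_of n. length lam = N}"
      using gmap_mem[of _ "n - N" N] True by auto
    show "hmap ` {lam \<in> partitions_of n. length lam = N} \<subseteq> {mu \<in> partitions_of (n - N). length mu \<le> N}"
      using hmap_mem by auto
  qed
  have "(\<Sum>lam\<in>{lam\<in>partitions_of n. length lam = N}. wt q1 q2 i j lam)
      = (\<Sum>mu\<in>{mu\<in>partitions_of (n - N). length mu \<le> N}. wt q1 q2 i j (gmap N mu))"
    by (rule sum.reindex_bij_betw[OF b, symmetric])
  also have "\<dots> = (\<Sum>mu\<in>{mu\<in>partitions_of (n - N). length mu \<le> N}. cm q1 q2 i j N * wt q1 q2 i j mu)"
    using wt_gmap[OF assms(1,2)] by (intro sum.cong) auto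
  finally show ?thesis using True by (simp add: sum_distrib_left)
qed

lemma one_le_Suc: "1 \<le> Suc N" by simp

lemma PP_rec:
  assumes "1 \<le> i" "i < j"
  shows "PP q1 q2 i j N = (1 - fps_const (cm q1 q2 i j (Suc N)) * fps_X ^ Suc N) * PP q1 q2 i j (Suc N)"
proof (rule fps_ext)
  fix n
  define A where "A = {lam\<in>partitions_of n. length lam \<le> N}"
  define B where "B = {lam\<in>partitions_of n. length lam = Suc N}"
  have fA: "finite A" unfolding A_def using finite_partitions by auto
  have fB: "finite B" unfolding B_def using finite_partitions by auto
  have seteq: "{lam\<in>partitions_of n. length lam \<le> Suc N} = A \<union> B"
    unfolding A_def B_def by auto
  have "fps_nth (PP q1 q2 i j (Suc N)) n = (\<Sum>lam\<in>A \<union> B. wt q1 q2 i j lam)"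
    unfolding PP_def fps_nth_Abs_fps seteq ..
  also have "\<dots> = (\<Sum>lam\<in>A. wt q1 q2 i j lam) + (\<Sum>lam\<in>B. wt q1 q2 i j lam)"
    by (rule sum.union_disjoint[OF fA fB]) (auto simp: A_def B_def)
  also have "(\<Sum>lam\<in>A. wt q1 q2 i j lam) = fps_nth (PP q1 q2 i j N) n"
    unfolding PP_def fps_nth_Abs_fps A_def ..
  also have "(\<Sum>lam\<in>B. wt q1 q2 i j lam)
     = fps_nth (fps_const (cm q1 q2 i j (Suc N)) * fps_X ^ Suc N * PP q1 q2 i j (Suc N)) n"
    unfolding B_def bijsum[OF assms one_le_Suc] mult.assoc fps_mult_left_const_nth fps_X_power_mult_nth
    by (simp add: PP_def)
  finally have eq: "fps_nth (PP q1 q2 i j (Suc N)) n = fps_nth (PP q1 q2 i j N) n + fps_nth (fps_const (cm q1 q2 i j (Suc N)) * fps_X ^ Suc N * PP q1 q2 i j (Suc N)) n" .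
  show "fps_nth (PP q1 q2 i j N) n = fps_nth ((1 - fps_const (cm q1 q2 i j (Suc N)) * fps_X ^ Suc N) * PP q1 q2 i j (Suc N)) n"
    unfolding left_diff_distrib mult_1 fps_sub_nth eq by simp
qed

lemma part_Nil: "part [] k = 0" by (simp add: part_def)

lemma PP0: "PP q1 q2 i j 0 = 1"
proof (rule fps_ext)
  fix n
  have E: "{lam\<in>partitions_of n. length lam \<le> 0} = (if n = 0 then {[]} else {})"
    by (auto simp: partitions_of_def)
  show "fps_nth (PP q1 q2 i j 0) n = fps_nth 1 n"
    unfolding PP_def fps_nth_Abs_fps E by (simp add: wt_def part_Nil)
qed

lemma EE_PP:
  assumes "1 \<le> i" "i < j"
  shows "EE q1 q2 i j N * PP q1 q2 i j N = 1"
proof (induction N)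
  case 0
  then show ?case by (simp add: EE_def PP0)
next
  case (Suc N)
  have "EE q1 q2 i j (Suc N) * PP q1 q2 i j (Suc N)
      = EE q1 q2 i j N * ((1 - fps_const (cm q1 q2 i j (Suc N)) * fps_X ^ Suc N) * PP q1 q2 i j (Suc N))"
    by (simp add: EE_def mult.assoc)
  also have "\<dots> = 1" using Suc PP_rec[OF assms, of q1 q2 N, symmetric] by simp
  finally show ?case .
qed

lemma PP_nth:
  assumes "k \<le> N"
  shows "fps_nth (PP q1 q2 i j N) k = (\<Sum>lam\<in>partitions_of k. wt q1 q2 i j lam)"
proof -
  have "{lam\<in>partitions_of k. length lam \<le> N} = partitions_of k"
    using assms len_le_sum by (fastforce simp: partitions_of_def)
  thus ?thesis by (simp add: PP_def)
qed


lemma qpoch_Suc: "qpoch a (Suc r) = qpoch a r * (1 - a * fps_X ^ r)"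
  by (simp add: qpoch_def)

lemma qpoch_nth0:
  fixes a :: "'a::comm_ring_1 fps"
  assumes "fps_nth a 0 = 0"
  shows "fps_nth (qpoch a r) 0 = 1"
proof (induction r)
  case 0
  then show ?case by (simp add: qpoch_def)
next
  case (Suc r)
  then show ?case using assms by (simp add: qpoch_Suc fps_mult_nth_0)
qed

lemma qpoch_stable:
  fixes a :: "'a::comm_ring_1 fps"
  assumes "fps_nth a 0 = 0" "k \<le> r"
  shows "fps_nth (qpoch a r) k = fps_nth (qpoch a k) k"
  using assms(2)
proof (induction r rule: dec_induct)
  case base
  then show ?case by simp
next
  case (step r)
  have e: "qpoch a (Suc r) = qpoch a r - (qpoch a r * a) * fps_X ^ r"
    by (simp add: qpoch_Suc algebra_simps)
  have "fps_nth ((qpoch a r * a) * fps_X ^ r) k = 0"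
    using step(1) assms(1) by (auto simp: fps_X_power_mult_right_nth fps_mult_nth_0)
  then show ?case unfolding e fps_sub_nth using step by simp
qed

lemma qpoch_inf_eq:
  fixes a :: "'a::comm_ring_1 fps"
  assumes "fps_nth a 0 = 0"
  shows "qpoch_inf a = Abs_fps (\<lambda>k. fps_nth (qpoch a k) k)"
  unfolding qpoch_inf_def
proof (rule limI, rule tendsto_fpsI)
  fix n
  show "\<forall>\<^sub>F x in sequentially. fps_nth (qpoch a x) n = fps_nth (Abs_fps (\<lambda>k. fps_nth (qpoch a k) k)) n"
    using eventually_ge_at_top[of n]
    by eventually_elim (simp only: fps_nth_Abs_fps, rule qpoch_stable[OF assms])
qed

lemma qpoch_inf_nth:
  fixes a :: "'a::comm_ring_1 fps"
  assumes "fps_nth a 0 = 0" "k \<le> r"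
  shows "fps_nth (qpoch_inf a) k = fps_nth (qpoch a r) k"
  unfolding qpoch_inf_eq[OF assms(1)] fps_nth_Abs_fps by (rule qpoch_stable[OF assms, symmetric])

lemma qpoch_inf_nth0:
  fixes a :: "'a::comm_ring_1 fps"
  assumes "fps_nth a 0 = 0"
  shows "fps_nth (qpoch_inf a) 0 = 1"
  using qpoch_inf_nth[OF assms, of 0 0] by (simp add: qpoch_def)

lemma mult_nth_agree:
  fixes f g h :: "'a::comm_ring_1 fps"
  assumes "\<And>k. k \<le> n \<Longrightarrow> fps_nth f k = fps_nth g k"
  shows "fps_nth (f * h) n = fps_nth (g * h) n"
  unfolding fps_mult_nth using assms by (intro sum.cong) auto

lemma qpoch_split: "qpoch a (m + r) = qpoch a m * qpoch (a * fps_X ^ m) r"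
proof (induction r)
  case 0
  then show ?case by (simp add: qpoch_def)
next
  case (Suc r)
  have "a * fps_X ^ m * fps_X ^ r = a * fps_X ^ (m + r)"
    by (simp add: power_add mult.assoc)
  then show ?case using Suc by (simp add: qpoch_Suc mult.assoc)
qed

lemma qpoch_inf_split:
  fixes a :: "'a::comm_ring_1 fps"
  assumes "fps_nth a 0 = 0"
  shows "qpoch_inf a = qpoch a m * qpoch_inf (a * fps_X ^ m)"
proof (rule fps_ext)
  fix n
  have a0: "fps_nth (a * fps_X ^ m) 0 = 0" using assms by (simp add: fps_mult_nth_0)
  have "fps_nth (qpoch_inf a) n = fps_nth (qpoch a (m + n)) n"
    using qpoch_inf_nth[OF assms] by simp
  also have "\<dots> = fps_nth (qpoch (a * fps_X ^ m) n * qpoch a m) n"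
    by (simp add: qpoch_split mult.commute)
  also have "\<dots> = fps_nth (qpoch_inf (a * fps_X ^ m) * qpoch a m) n"
    using qpoch_inf_nth[OF a0] by (intro mult_nth_agree) auto
  finally show "fps_nth (qpoch_inf a) n = fps_nth (qpoch a m * qpoch_inf (a * fps_X ^ m)) n"
    by (simp add: mult.commute)
qed

lemma EE_split:
  "EE q1 q2 i j (m + r) = EE q1 q2 i j m * (\<Prod>k<r. 1 - fps_const (cm q1 q2 i j (Suc (m + k))) * fps_X ^ Suc (m + k))"
  by (induction r) (simp_all add: EE_def mult.assoc)

lemma EE_ABC:
  fixes q1 q2 :: "'a::comm_ring_1"
  assumes "1 \<le> i" "i < j"
  shows "qpoch fps_X (i - 1) * qpoch (fps_X ^ i * fps_const q1) (j - i)
           * qpoch (fps_X ^ j * fps_const q1 * fps_const q2) R = EE q1 q2 i j (j - 1 + R)"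
proof -
  have A: "EE q1 q2 i j (i - 1) = qpoch fps_X (i - 1)"
    unfolding EE_def qpoch_def
    by (intro prod.cong) (auto simp: cm_def)
  have "EE q1 q2 i j (j - 1) = EE q1 q2 i j ((i - 1) + (j - i))"
    using assms by simp
  also have "\<dots> = qpoch fps_X (i - 1) * qpoch (fps_X ^ i * fps_const q1) (j - i)"
    unfolding EE_split A qpoch_def
  proof (intro arg_cong2[where f="(*)"] refl prod.cong)
    fix k assume "k \<in> {..<j - i}"
    hence h: "Suc (i - 1 + k) = i + k" "cm q1 q2 i j (i + k) = q1"
      using assms by (auto simp: cm_def)
    have r: "fps_X ^ i * fps_const q1 * fps_X ^ k = fps_const q1 * fps_X ^ (i + k)"
      by (simp only: power_add mult_ac)
    show "1 - fps_const (cm q1 q2 i j (Suc (i - 1 + k))) * fps_X ^ Suc (i - 1 + k)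
        = 1 - fps_X ^ i * fps_const q1 * fps_X ^ k"
      by (simp only: h r)
  qed
  finally have B: "EE q1 q2 i j (j - 1) = qpoch fps_X (i - 1) * qpoch (fps_X ^ i * fps_const q1) (j - i)" .
  have "EE q1 q2 i j (j - 1 + R) = EE q1 q2 i j (j - 1) * qpoch (fps_X ^ j * fps_const q1 * fps_const q2) R"
    unfolding EE_split qpoch_def
  proof (intro arg_cong2[where f="(*)"] refl prod.cong)
    fix k assume "k \<in> {..<R}"
    have h: "Suc (j - 1 + k) = j + k" "cm q1 q2 i j (j + k) = q1 * q2"
      using assms by (auto simp: cm_def)
    have r: "fps_X ^ j * fps_const q1 * fps_const q2 * fps_X ^ k = fps_const (q1 * q2) * fps_X ^ (j + k)"
      by (simp only: power_add mult_ac fps_const_mult[symmetric])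
    show "1 - fps_const (cm q1 q2 i j (Suc (j - 1 + k))) * fps_X ^ Suc (j - 1 + k)
        = 1 - fps_X ^ j * fps_const q1 * fps_const q2 * fps_X ^ k"
      by (simp only: h r)
  qed
  thus ?thesis using B by simp
qed

theorem lemma3p4:
  fixes q1 q2 :: "'a::field" and i j :: nat
  assumes "1 \<le> i" and "i < j"
  shows "bracket (\<lambda>lam. q1 ^ part lam i * q2 ^ part lam j)
           = qpoch_inf fps_X /
             (qpoch fps_X (i - 1) * qpoch (fps_X ^ i * fps_const q1) (j - i)
              * qpoch_inf (fps_X ^ j * fps_const q1 * fps_const q2))
       \<and> qpoch_inf fps_X /
             (qpoch fps_X (i - 1) * qpoch (fps_X ^ i * fps_const q1) (j - i)
              * qpoch_inf (fps_X ^ j * fps_const q1 * fps_const q2))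
           = qpoch_inf fps_X / qpoch_inf (fps_X * fps_const q1 * fps_const q2)
             * ((qpoch (fps_X * fps_const q1) (i - 1) * qpoch (fps_X * fps_const q1 * fps_const q2) (j - 1))
                / (qpoch fps_X (i - 1) * qpoch (fps_X * fps_const q1) (j - 1)))"
proof -
  define A where "A = qpoch (fps_X :: 'a fps) (i - 1)"
  define B where "B = qpoch (fps_X ^ i * fps_const q1) (j - i)"
  define C where "C = qpoch_inf (fps_X ^ j * fps_const q1 * fps_const q2)"
  define F where "F = Abs_fps (\<lambda>n. \<Sum>xs\<in>partitions_of n. q1 ^ part xs i * q2 ^ part xs j)"
  define u where "u = qpoch_inf (fps_X :: 'a fps)"
  have x0: "fps_nth (fps_X :: 'a fps) 0 = 0" by simp
  have bi0: "fps_nth (fps_X ^ i * fps_const q1) 0 = 0" using assms by (simp add: fps_mult_nth_0)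
  have cj0: "fps_nth (fps_X ^ j * fps_const q1 * fps_const q2) 0 = 0" using assms by (simp add: fps_mult_nth_0)
  have A0: "fps_nth A 0 = 1" unfolding A_def by (rule qpoch_nth0) simp
  have B0: "fps_nth B 0 = 1" unfolding B_def by (rule qpoch_nth0) (rule bi0)
  have C0: "fps_nth C 0 = 1" unfolding C_def by (rule qpoch_inf_nth0) (rule cj0)
  have D0: "fps_nth (A * B * C) 0 = 1" using A0 B0 C0 by (simp add: fps_mult_nth_0)
  have DF: "A * B * C * F = 1"
  proof (rule fps_ext)
    fix n
    define N where "N = j - 1 + n"
    have "fps_nth (A * B * C * F) n = fps_nth (F * (A * B) * C) n" by (simp add: mult_ac)
    also have "\<dots> = fps_nth (F * (A * B) * qpoch (fps_X ^ j * fps_const q1 * fps_const q2) n) n"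
      unfolding mult.commute[of "F * (A * B)"] C_def
      using qpoch_inf_nth[OF cj0] by (intro mult_nth_agree) auto
    also have "\<dots> = fps_nth (F * EE q1 q2 i j N) n"
      unfolding N_def EE_ABC[OF assms, symmetric] A_def B_def by (simp add: mult_ac)
    also have "\<dots> = fps_nth (PP q1 q2 i j N * EE q1 q2 i j N) n"
      using PP_nth[of _ N q1 q2 i j] by (intro mult_nth_agree) (auto simp: F_def N_def wt_def)
    also have "\<dots> = fps_nth 1 n" by (simp only: mult.commute[of "PP q1 q2 i j N"] EE_PP[OF assms])
    finally show "fps_nth (A * B * C * F) n = fps_nth 1 n" .
  qed
  have invD: "inverse (A * B * C) = F" by (rule fps_inverse_unique[OF DF])
  have D0': "fps_nth (A * B * C) 0 \<noteq> 0" using D0 by simp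
  have first: "bracket (\<lambda>lam. q1 ^ part lam i * q2 ^ part lam j) = u / (A * B * C)"
  proof -
    have "bracket (\<lambda>lam. q1 ^ part lam i * q2 ^ part lam j) = u * F"
      unfolding bracket_def u_def F_def ..
    also have "\<dots> = u * inverse (A * B * C)" using invD by simp
    also have "\<dots> = u / (A * B * C)" using fps_divide_unit[OF D0'] by simp
    finally show ?thesis .
  qed
  define Q where "Q = qpoch (fps_X * fps_const q1 * fps_const q2) (j - 1)"
  define P1 where "P1 = qpoch (fps_X * fps_const q1) (i - 1)"
  have xc0: "fps_nth (fps_X * fps_const q1 * fps_const q2) 0 = 0" by (simp add: fps_mult_nth_0)
  have x10: "fps_nth (fps_X * fps_const q1) 0 = 0" by (simp add: fps_mult_nth_0)
  have e1: "fps_X * fps_const q1 * fps_const q2 * fps_X ^ (j - 1) = fps_X ^ j * fps_const q1 * fps_const (q2::'a)"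
  proof -
    have jj: "j = Suc (j - 1)" using assms by simp
    have "(fps_X :: 'a fps) ^ j = fps_X ^ Suc (j - 1)" using jj by (rule arg_cong)
    also have "\<dots> = fps_X * fps_X ^ (j - 1)" by (rule power_Suc)
    finally have xj: "(fps_X :: 'a fps) ^ j = fps_X * fps_X ^ (j - 1)" .
    show ?thesis unfolding xj by (simp only: mult_ac)
  qed
  have Qi: "qpoch_inf (fps_X * fps_const q1 * fps_const q2) = Q * C"
    unfolding Q_def C_def qpoch_inf_split[OF xc0, of "j - 1"] e1 ..
  have e2: "fps_X * fps_const q1 * fps_X ^ (i - 1) = fps_X ^ i * fps_const (q1::'a)"
  proof -
    have ii: "i = Suc (i - 1)" using assms by simp
    have "(fps_X :: 'a fps) ^ i = fps_X ^ Suc (i - 1)" using ii by (rule arg_cong)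
    also have "\<dots> = fps_X * fps_X ^ (i - 1)" by (rule power_Suc)
    finally have xi: "(fps_X :: 'a fps) ^ i = fps_X * fps_X ^ (i - 1)" .
    show ?thesis unfolding xi by (simp only: mult_ac)
  qed
  have P2: "qpoch (fps_X * fps_const q1) (j - 1) = P1 * B"
  proof -
    have js: "j - 1 = (i - 1) + (j - i)" using assms by simp
    have "qpoch (fps_X * fps_const q1) (j - 1) = qpoch (fps_X * fps_const q1) ((i - 1) + (j - i))"
      using js by (rule arg_cong)
    also have "\<dots> = P1 * qpoch (fps_X * fps_const q1 * fps_X ^ (i - 1)) (j - i)"
      unfolding P1_def by (rule qpoch_split)
    also have "\<dots> = P1 * B" unfolding e2 B_def ..
    finally show ?thesis .
  qed
  have Q0: "fps_nth Q 0 = 1" unfolding Q_def by (rule qpoch_nth0) (rule xc0)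
  have P10: "fps_nth P1 0 = 1" unfolding P1_def by (rule qpoch_nth0) (rule x10)
  have QC0: "fps_nth (Q * C) 0 \<noteq> 0" using Q0 C0 by (simp add: fps_mult_nth_0)
  have AP0: "fps_nth (A * (P1 * B)) 0 \<noteq> 0" using A0 P10 B0 by (simp add: fps_mult_nth_0)
  have iQ: "inverse Q * Q = 1" using Q0 by (intro inverse_mult_eq_1) simp
  have iP: "inverse P1 * P1 = 1" using P10 by (intro inverse_mult_eq_1) simp
  have second: "u / (A * B * C) = u / (Q * C) * ((P1 * Q) / (A * (P1 * B)))"
  proof -
    have "u / (Q * C) * ((P1 * Q) / (A * (P1 * B)))
        = u * (inverse Q * inverse C) * (P1 * Q * (inverse A * (inverse P1 * inverse B)))"
      unfolding fps_divide_unit[OF QC0] fps_divide_unit[OF AP0] fps_inverse_mult ..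
    also have "\<dots> = u * (inverse A * inverse B * inverse C) * (inverse Q * Q) * (inverse P1 * P1)"
      by (simp only: mult_ac)
    also have "\<dots> = u * inverse (A * B * C)" unfolding iQ iP fps_inverse_mult by simp
    also have "\<dots> = u / (A * B * C)" using fps_divide_unit[OF D0'] by simp
    finally show ?thesis by simp
  qed
  show ?thesis
    using first second Qi P2 unfolding A_def B_def C_def u_def Q_def P1_def by simp
qed

end
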